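(* Let $\mathbb{K}=(G,M,I)$ be a finite reduced formal context, $\mathcal{A}$ the set of its proper premises, and $BC(\mathcal{A}):=\{A\in\mathcal{A}\mid |A|=1\}$. Then for every $A\in BC(\mathcal{A})$, the set $A^{\bullet}$ computed in $\mathbb{K}$ equals $A^{\bullet}$ computed in $BC(\mathbb{K})$, and both equal $A''\setminus A$. Furthermore, $BC(\mathcal{A})$ is exactly the set of all proper premises of $BC(\mathbb{K})$.
   Context: For a formal context $(G,M,I)$, derivation: $A'=\{m\in M\mid\forall g\in A:(g,m)\in I\}$ for $A\subseteq G$, and $B'=\{g\in G\mid\forall m\in B:(g,m)\in I\}$ for $B\subseteq M$. An object $g$ is irreducible if there is no $X\subseteq G$ with $g\notin X$ and $X'=\{g\}'$; an attribute $m$ is irreducible if there is no $X\subseteq M$ with $m\notin X$ and $X'=\{m\}'$; a context is reduced if all objects and attributes are irreducible. For $A\subseteq M$ define $A^{\bullet}:=A''\setminus\big(A\cup\bigcup_{n\in A}(A\setminus\{n\})''\big)$; $A$ is a proper premise if $A^{\bullet}\neq\emptyset$. For $m,n\in M$, $m\ge_{\mathbb{K}}n$ iff $\{m\}'\supseteq\{n\}'$. Let $\mathcal{M}(M)$ be the set of attributes whose attribute concept $(\{m\}',\{m\}'')$ is meet-irreducible in the concept lattice, and $\overline{\mathcal{M}(M)}=\{\overline m\mid m\in\mathcal{M}(M)\}$ new elements. The Birkhoff completion is $BC(\mathbb{K}):=\big(G\cup\overline{\mathcal{M}(M)},M,I\cup\{(\overline m,n)\in\overline{\mathcal{M}(M)}\times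 M\mid m\not\ge_{\mathbb{K}}n\}\big)$; "computed in $BC(\mathbb{K})$" means using the derivation operators of $BC(\mathbb{K})$ in the definition of $A^{\bullet}$ and of proper premise. *)

theory Defs
  imports Main
begin

record ('g, 'm) fcontext =
  objs :: "'g set"
  attrs :: "'m set"
  inc :: "('g \<times> 'm) set"

definition wf_context :: "('g, 'm) fcontext \<Rightarrow> bool" where
  "wf_context K \<longleftrightarrow> inc K \<subseteq> objs K \<times> attrs K"

definition intent :: "('g, 'm) fcontext \<Rightarrow> 'g set \<Rightarrow> 'm set" where
  "intent K A = {m \<in> attrs K. \<forall>g\<in>A. (g, m) \<in> inc K}"

definition extent :: "('g, 'm) fcontext \<Rightarrow> 'm set \<Rightarrow> 'g set" where
  "extent K B = {g \<in> objs K. \<forall>m\<in>B. (g, m) \<in> inc K}"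

definition aclosure :: "('g, 'm) fcontext \<Rightarrow> 'm set \<Rightarrow> 'm set" where
  "aclosure K B = intent K (extent K B)"

definition irreducible_obj :: "('g, 'm) fcontext \<Rightarrow> 'g \<Rightarrow> bool" where
  "irreducible_obj K g \<longleftrightarrow>
     \<not> (\<exists>X \<subseteq> objs K. g \<notin> X \<and> intent K X = intent K {g})"

definition irreducible_attr :: "('g, 'm) fcontext \<Rightarrow> 'm \<Rightarrow> bool" where
  "irreducible_attr K m \<longleftrightarrow>
     \<not> (\<exists>X \<subseteq> attrs K. m \<notin> X \<and> extent K X = extent K {m})"

definition reduced :: "('g, 'm) fcontext \<Rightarrow> bool" where
  "reduced K \<longleftrightarrow> (\<forall>g \<in> objs K. irreducible_obj K g) \<and> (\<forall>m \<in> attrs K. irreducible_attr K m)"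

definition bullet :: "('g, 'm) fcontext \<Rightarrow> 'm set \<Rightarrow> 'm set" where
  "bullet K A = aclosure K A - (A \<union> (\<Union>n\<in>A. aclosure K (A - {n})))"

definition proper_premises :: "('g, 'm) fcontext \<Rightarrow> 'm set set" where
  "proper_premises K = {A. A \<subseteq> attrs K \<and> bullet K A \<noteq> {}}"

definition attr_ge :: "('g, 'm) fcontext \<Rightarrow> 'm \<Rightarrow> 'm \<Rightarrow> bool" where
  "attr_ge K m n \<longleftrightarrow> extent K {m} \<supseteq> extent K {n}"

definition is_concept :: "('g, 'm) fcontext \<Rightarrow> 'g set \<times> 'm set \<Rightarrow> bool" where
  "is_concept K c \<longleftrightarrow> fst c \<subseteq> objs K \<and> snd c \<subseteq> attrs K \<and>
     intent K (fst c) = snd c \<and> extent K (snd c) = fst c"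

definition concept_le :: "'g set \<times> 'm set \<Rightarrow> 'g set \<times> 'm set \<Rightarrow> bool" where
  "concept_le c d \<longleftrightarrow> fst c \<subseteq> fst d"

definition concept_top :: "('g, 'm) fcontext \<Rightarrow> 'g set \<times> 'm set" where
  "concept_top K = (objs K, intent K (objs K))"

definition concept_meet :: "('g, 'm) fcontext \<Rightarrow> 'g set \<times> 'm set \<Rightarrow> 'g set \<times> 'm set \<Rightarrow> 'g set \<times> 'm set" where
  "concept_meet K c d = (fst c \<inter> fst d, intent K (fst c \<inter> fst d))"

definition meet_irreducible_concept :: "('g, 'm) fcontext \<Rightarrow> 'g set \<times> 'm set \<Rightarrow> bool" where
  "meet_irreducible_concept K c \<longleftrightarrow> is_concept K c \<and> c \<noteq> concept_top K \<and>
     (\<forall>d e. is_concept K d \<and> is_concept K e \<and> c = concept_meet K d e \<longrightarrow> c = d \<or> c = e)"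

definition attr_concept :: "('g, 'm) fcontext \<Rightarrow> 'm \<Rightarrow> 'g set \<times> 'm set" where
  "attr_concept K m = (extent K {m}, intent K (extent K {m}))"

definition meet_irr_attrs :: "('g, 'm) fcontext \<Rightarrow> 'm set" where
  "meet_irr_attrs K = {m \<in> attrs K. meet_irreducible_concept K (attr_concept K m)}"

text \<open>Birkhoff completion: new objects \<overline>m are represented as Inr m, old objects g as Inl g.\<close>
definition birkhoff_completion :: "('g, 'm) fcontext \<Rightarrow> ('g + 'm, 'm) fcontext" where
  "birkhoff_completion K =
     \<lparr> objs = Inl ` objs K \<union> Inr ` meet_irr_attrs K,
       attrs = attrs K,
       inc = {(Inl g, m) | g m. (g, m) \<in> inc K} \<union>
             {(Inr m, n) | m n. m \<in> meet_irr_attrs K \<and> n \<in> attrs K \<and> \<not> attr_ge K m n} \<rparr>"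

end

theory Submission
  imports Defs
begin

lemma bc_objs: "objs (birkhoff_completion K) = Inl ` objs K \<union> Inr ` meet_irr_attrs K"
  by (simp add: birkhoff_completion_def)
lemma bc_attrs: "attrs (birkhoff_completion K) = attrs K"
  by (simp add: birkhoff_completion_def)
lemma bc_inc: "inc (birkhoff_completion K) = {(Inl g, m) | g m. (g, m) \<in> inc K} \<union>
             {(Inr m, n) | m n. m \<in> meet_irr_attrs K \<and> n \<in> attrs K \<and> \<not> attr_ge K m n}"
  by (simp add: birkhoff_completion_def)

lemma acl_mono: "A \<subseteq> B \<Longrightarrow> aclosure K A \<subseteq> aclosure K B"
  unfolding aclosure_def intent_def extent_def by blast

lemma extent_anti: "B \<subseteq> C \<Longrightarrow> extent K C \<subseteq> extent K B"
  unfolding extent_def by blast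

lemma extent_Un: "extent K (B \<union> C) = extent K B \<inter> extent K C"
  unfolding extent_def by blast

lemma acl_single_iff: "m \<in> aclosure K {a} \<longleftrightarrow> m \<in> attrs K \<and> attr_ge K m a"
  unfolding aclosure_def intent_def extent_def attr_ge_def by blast

lemma reduced_empty:
  assumes "reduced K" shows "aclosure K {} = {}"
proof (rule ccontr)
  assume "aclosure K {} \<noteq> {}"
  then obtain m where m: "m \<in> aclosure K {}" by blast
  then have ma: "m \<in> attrs K" unfolding aclosure_def intent_def by blast
  have "extent K {m} = extent K {}" using m unfolding aclosure_def intent_def extent_def by auto
  then show False using assms ma unfolding reduced_def irreducible_attr_def by blast
qed

lemma reduced_MI:
  assumes "reduced K" and ma: "m \<in> attrs K" shows "m \<in> meet_irr_attrs K"
proof -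
  have irr: "\<not> (\<exists>X \<subseteq> attrs K. m \<notin> X \<and> extent K X = extent K {m})"
    using assms unfolding reduced_def irreducible_attr_def by blast
  let ?c = "attr_concept K m"
  have conc: "is_concept K ?c"
    using ma unfolding is_concept_def attr_concept_def intent_def extent_def by auto
  have ntop: "?c \<noteq> concept_top K"
  proof
    assume "?c = concept_top K"
    then have "extent K {m} = extent K {}"
      unfolding attr_concept_def concept_top_def extent_def by auto
    then show False using irr by blast
  qed
  have meet: "\<forall>d e. is_concept K d \<and> is_concept K e \<and> ?c = concept_meet K d e \<longrightarrow> ?c = d \<or> ?c = e"
  proof (intro allI impI, rule ccontr)
    fix d e
    assume h: "is_concept K d \<and> is_concept K e \<and> ?c = concept_meet K d e"
       and ne: "\<not> (?c = d \<or> ?c = e)"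
    obtain d1 d2 where d: "d = (d1, d2)" by (cases d)
    obtain e1 e2 where e: "e = (e1, e2)" by (cases e)
    have dc: "d1 \<subseteq> objs K" "d2 \<subseteq> attrs K" "intent K d1 = d2" "extent K d2 = d1"
      using h d unfolding is_concept_def by auto
    have ec: "e1 \<subseteq> objs K" "e2 \<subseteq> attrs K" "intent K e1 = e2" "extent K e2 = e1"
      using h e unfolding is_concept_def by auto
    have ext: "extent K {m} = d1 \<inter> e1"
      using h d e unfolding attr_concept_def concept_meet_def by auto
    have ceq: "?c = (d1 \<inter> e1, intent K (d1 \<inter> e1))"
      using h d e unfolding concept_meet_def by auto
    have "extent K (d2 \<union> e2) = extent K {m}"
      using dc(4) ec(4) ext extent_Un by metis
    moreover have "m \<notin> d2"
    proof
      assume "m \<in> d2"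
      then have "d1 \<subseteq> extent K {m}" using dc(4) extent_anti[of "{m}" d2 K] by blast
      then have "d1 \<inter> e1 = d1" using ext by auto
      then have "?c = d" using ceq d dc by simp
      then show False using ne by blast
    qed
    moreover have "m \<notin> e2"
    proof
      assume "m \<in> e2"
      then have "e1 \<subseteq> extent K {m}" using ec(4) extent_anti[of "{m}" e2 K] by blast
      then have "d1 \<inter> e1 = e1" using ext by auto
      then have "?c = e" using ceq e ec by simp
      then show False using ne by blast
    qed
    ultimately have X: "d2 \<union> e2 \<subseteq> attrs K \<and> m \<notin> d2 \<union> e2 \<and> extent K (d2 \<union> e2) = extent K {m}"
      using dc(2) ec(2) by blast
    show False using irr X by blast
  qed
  show ?thesis using ma conc ntop meet unfolding meet_irr_attrs_def meet_irreducible_concept_def by blast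
qed

lemma bc_acl_below:
  assumes "reduced K" and "A \<subseteq> attrs K"
    and m: "m \<in> aclosure (birkhoff_completion K) A"
  shows "\<exists>a\<in>A. attr_ge K m a"
proof (rule ccontr)
  assume nn: "\<not> (\<exists>a\<in>A. attr_ge K m a)"
  have ma: "m \<in> attrs K" using m unfolding aclosure_def intent_def bc_attrs by blast
  have mi: "m \<in> meet_irr_attrs K" using reduced_MI[OF assms(1) ma] .
  have "Inr m \<in> extent (birkhoff_completion K) A"
    using nn mi assms(2) unfolding extent_def bc_objs bc_inc by auto
  then have "(Inr m, m) \<in> inc (birkhoff_completion K)"
    using m unfolding aclosure_def intent_def by blast
  then show False unfolding bc_inc attr_ge_def by auto
qed

lemma bc_acl_single:
  assumes "reduced K" and a: "a \<in> attrs K"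
  shows "aclosure (birkhoff_completion K) {a} = aclosure K {a}"
proof
  show "aclosure (birkhoff_completion K) {a} \<subseteq> aclosure K {a}"
  proof
    fix m assume m: "m \<in> aclosure (birkhoff_completion K) {a}"
    have ma: "m \<in> attrs K" using m unfolding aclosure_def intent_def bc_attrs by blast
    show "m \<in> aclosure K {a}" using bc_acl_below[OF assms(1) _ m] a ma acl_single_iff[of m K a] by auto
  qed
next
  show "aclosure K {a} \<subseteq> aclosure (birkhoff_completion K) {a}"
  proof
    fix m assume m: "m \<in> aclosure K {a}"
    then have ma: "m \<in> attrs K" and ge: "attr_ge K m a" using acl_single_iff[of m K a] by auto
    have "\<forall>x\<in>extent (birkhoff_completion K) {a}. (x, m) \<in> inc (birkhoff_completion K)"
    proof
      fix x assume x: "x \<in> extent (birkhoff_completion K) {a}"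
      show "(x, m) \<in> inc (birkhoff_completion K)"
      proof (cases x)
        case (Inl g)
        then have "g \<in> objs K" "(g, a) \<in> inc K" using x unfolding extent_def bc_objs bc_inc by auto
        then have "g \<in> extent K {m}" using ge unfolding attr_ge_def extent_def by auto
        then show ?thesis using Inl unfolding bc_inc extent_def by auto
      next
        case (Inr k)
        then have k: "k \<in> meet_irr_attrs K" "\<not> attr_ge K k a"
          using x unfolding extent_def bc_objs bc_inc by auto
        have "\<not> attr_ge K k m" using k(2) ge unfolding attr_ge_def by auto
        then show ?thesis using Inr k ma unfolding bc_inc by auto
      qed
    qed
    then show "m \<in> aclosure (birkhoff_completion K) {a}"
      using ma unfolding aclosure_def intent_def bc_attrs by blast
  qed
qed

lemma bc_empty:
  assumes "reduced K" shows "aclosure (birkhoff_completion K) {} = {}"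
  using bc_acl_below[OF assms, of "{}"] by auto

theorem mainTheorem7:
  fixes K :: "('g, 'm) fcontext"
  assumes "wf_context K"
    and "finite (objs K)" and "finite (attrs K)"
    and "reduced K"
  shows "(\<forall>A \<in> {A \<in> proper_premises K. card A = 1}.
            bullet K A = bullet (birkhoff_completion K) A \<and>
            bullet (birkhoff_completion K) A = aclosure K A - A)
         \<and> proper_premises (birkhoff_completion K) = {A \<in> proper_premises K. card A = 1}"
proof -
  note red = assms(4)
  have single: "bullet K {a} = aclosure K {a} - {a} \<and> bullet (birkhoff_completion K) {a} = aclosure K {a} - {a}"
    if a: "a \<in> attrs K" for a
    using reduced_empty[OF red] bc_empty[OF red] bc_acl_single[OF red a]
    unfolding bullet_def by auto
  have P1: "\<forall>A \<in> {A \<in> proper_premises K. card A = 1}.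
            bullet K A = bullet (birkhoff_completion K) A \<and>
            bullet (birkhoff_completion K) A = aclosure K A - A"
  proof
    fix A assume "A \<in> {A \<in> proper_premises K. card A = 1}"
    then obtain a where A: "A = {a}" and "A \<subseteq> attrs K"
      unfolding proper_premises_def by (auto simp: card_1_singleton_iff)
    then have "a \<in> attrs K" by auto
    then show "bullet K A = bullet (birkhoff_completion K) A \<and>
            bullet (birkhoff_completion K) A = aclosure K A - A" using single A by auto
  qed
  have P2: "proper_premises (birkhoff_completion K) = {A \<in> proper_premises K. card A = 1}"
  proof
    show "proper_premises (birkhoff_completion K) \<subseteq> {A \<in> proper_premises K. card A = 1}"
    proof
      fix A assume A: "A \<in> proper_premises (birkhoff_completion K)"
      then have As: "A \<subseteq> attrs K" and ne: "bullet (birkhoff_completion K) A \<noteq> {}"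
        unfolding proper_premises_def bc_attrs by auto
      then obtain m where m: "m \<in> bullet (birkhoff_completion K) A" by blast
      then have m1: "m \<in> aclosure (birkhoff_completion K) A" and mA: "m \<notin> A"
        and m3: "\<forall>n\<in>A. m \<notin> aclosure (birkhoff_completion K) (A - {n})"
        unfolding bullet_def by auto
      obtain a where aA: "a \<in> A" and ge: "attr_ge K m a"
        using bc_acl_below[OF red As m1] by blast
      have ma: "m \<in> attrs K" using m1 unfolding aclosure_def intent_def bc_attrs by blast
      have aa: "a \<in> attrs K" using aA As by auto
      have mcl: "m \<in> aclosure (birkhoff_completion K) {a}"
        using bc_acl_single[OF red aa] acl_single_iff[of m K a] ma ge by auto
      have "A = {a}"
      proof (rule ccontr)
        assume "A \<noteq> {a}"
        then obtain n where "n \<in> A" "n \<noteq> a" using aA by blast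
        then have "{a} \<subseteq> A - {n}" using aA by auto
        then have "m \<in> aclosure (birkhoff_completion K) (A - {n})"
          using acl_mono mcl by blast
        then show False using m3 \<open>n \<in> A\<close> by blast
      qed
      then show "A \<in> {A \<in> proper_premises K. card A = 1}"
        using single[OF aa] ne As unfolding proper_premises_def by auto
    qed
  next
    show "{A \<in> proper_premises K. card A = 1} \<subseteq> proper_premises (birkhoff_completion K)"
      using P1 unfolding proper_premises_def bc_attrs by auto
  qed
  show ?thesis using P1 P2 by blast
qed

end
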